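(* Let $\mathcal P$ be a countable set and consider a discrete-time Markov process $\{Z_t\}_{t\ge0}=\{(x_t,y_t)\}_{t\ge0}$ on $\mathbb R^d_+\times\mathcal P$ defined as follows: for each $i\in\mathcal P$ there is a measurable map $f(\cdot,i):\mathbb R^d_+\to\mathbb R^d_+$; there is a measurable map $P:\mathbb R^d_+\times\mathcal P\times\mathcal P\to[0,1]$ such that for each $(x,y)$, $P_x(y,\cdot):=P(x,y,\cdot)$ is a probability on $\mathcal P$; given $(x_n,y_n)=(x,y)$, first $y_{n+1}$ is drawn according to $P_x(y,\cdot)$ and then $x_{n+1}=f(x,y_{n+1})$; the initial state $(x_0,y_0)\in\mathbb R^d_+\times\mathcal P$ is given. Assume there is a constant $L>0$ with $\|x-f(x,i)\|\le L$ for all $(x,i)\in\mathbb R^d_+\times\mathcal P$. Suppose further that there exist a bounded measurable set $C\subset\mathbb R^d_+$ and a constant $a>0$ such that $$\sum_{y'\in\mathcal P}P_x(y,y')f(x,y')-x\le -a\frac{x}{\|x\|}\quad\text{for all }(x,y)\in(\mathbb R^d_+\setminus C)\times\mathcal P.$$ Then for every $r>0$, $\sup_{t\ge0}\mathbb E[\|x_t\|^r]<\infty$.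
   Context: $\mathbb R^d_+=\{x\in\mathbb R^d:x_i\ge0\ \forall i\}$, $\|\cdot\|$ is the Euclidean norm, and vector inequalities are component-wise. *)

theory Defs
  imports "HOL-Probability.Probability"
begin

definition orthant :: "(real^'d) set" where
  "orthant = {x. \<forall>i. 0 \<le> x $ i}"

text \<open>Law of Z_t = (x_t, y_t) for the chain started at z0: given (x_n,y_n) = (x,y),
  y_{n+1} is drawn from K x y and x_{n+1} = f x y_{n+1}.  Since the mark space is
  countable and the x-update is deterministic, every Z_t has a discrete law.\<close>
primrec markov_law ::
  "(real^'d \<Rightarrow> 'p::countable \<Rightarrow> real^'d) \<Rightarrow> (real^'d \<Rightarrow> 'p \<Rightarrow> 'p pmf)
   \<Rightarrow> (real^'d) \<times> 'p \<Rightarrow> nat \<Rightarrow> ((real^'d) \<times> 'p) pmf" where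
  "markov_law f K z0 0 = return_pmf z0"
| "markov_law f K z0 (Suc n) =
     bind_pmf (markov_law f K z0 n) (\<lambda>(x, y). map_pmf (\<lambda>y'. (f x y', y')) (K x y))"

end

theory Submission
  imports Defs
begin
lemma geo:
  fixes x v :: "'a::real_inner"
  assumes "norm (v - x) \<le> L" "norm x > L" "L \<ge> 0"
  shows "norm v \<le> (v \<bullet> x) / norm x + L^2 / (2 * (norm x - L))"
proof -
  define n where "n = norm x"
  define s where "s = (v \<bullet> x) / n"
  define c where "c = L^2 / (2 * (n - L))"
  have n: "n > 0" "n > L" using assms unfolding n_def by auto
  have c0: "c \<ge> 0" unfolding c_def using n by auto
  have "(x - v) \<bullet> x \<le> norm (x - v) * norm x" by (rule norm_cauchy_schwarz)
  also have "\<dots> \<le> L * n" using assms(1) n by (simp add: n_def norm_minus_commute mult_right_mono)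
  finally have "x \<bullet> x - v \<bullet> x \<le> L * n" by (simp add: inner_diff_left)
  hence "n*n - v \<bullet> x \<le> L * n" by (simp add: n_def dot_square_norm power2_eq_square)
  hence sL: "s \<ge> n - L" unfolding s_def using n by (simp add: field_simps)
  have "(norm (v - x))^2 \<le> L^2" using assms(1) norm_ge_zero power_mono by blast
  moreover have "(norm (v - x))^2 = (norm v)^2 - 2 * (v \<bullet> x) + n^2"
    unfolding power2_norm_eq_inner n_def by (simp add: inner_diff_left inner_diff_right inner_commute[of x v])
  ultimately have "(norm v)^2 - 2 * (v \<bullet> x) + n^2 \<le> L^2" by simp
  moreover have ns: "v \<bullet> x = n * s" using n by (simp add: s_def)
  moreover have "(s - n)^2 = s^2 - 2 * (n * s) + n^2" by (simp add: power2_diff algebra_simps)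
  moreover have "(s - n)^2 \<ge> 0" by simp
  ultimately have v2: "(norm v)^2 \<le> s^2 + L^2" by linarith
  have "2 * s * c \<ge> 2 * (n - L) * c" using sL c0 by (simp add: mult_right_mono)
  also have "2 * (n - L) * c = L^2" unfolding c_def using n by (simp add: field_simps)
  finally have "L^2 \<le> 2 * s * c" .
  moreover have "(s + c)^2 = s^2 + c^2 + 2 * s * c" by (rule power2_sum)
  moreover have "c^2 \<ge> 0" by simp
  ultimately have "s^2 + L^2 \<le> (s + c)^2" by linarith
  with v2 have "(norm v)^2 \<le> (s + c)^2" by linarith
  moreover have "0 \<le> s + c" using sL n c0 by linarith
  ultimately have "norm v \<le> s + c" by (rule power2_le_imp_le)
  thus ?thesis unfolding s_def c_def n_def .
qed

lemma vec_inner_mono: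
  fixes u w x :: "real^'d"
  assumes "u \<le> w" "\<And>i. 0 \<le> x $ i"
  shows "u \<bullet> x \<le> w \<bullet> x"
  unfolding inner_vec_def using assms
  by (intro sum_mono) (auto simp: less_eq_vec_def intro: mult_right_mono)

lemma exp_quad:
  fixes t :: real assumes "\<bar>t\<bar> \<le> 1" shows "exp t \<le> 1 + t + t^2"
proof (cases "t \<ge> 0")
  case True thus ?thesis using exp_bound assms by auto
next
  case False
  define s where "s = -t"
  have s: "0 < s" "s \<le> 1" using False assms by (auto simp: s_def)
  have "exp t = 1 / exp s" by (simp add: s_def exp_minus field_simps)
  also have "\<dots> \<le> 1 / (1 + s)" using s exp_ge_add_one_self[of s]
    by (intro divide_left_mono) auto
  also have "\<dots> \<le> 1 - s + s^2" using s
    by (simp add: field_simps power2_eq_square)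
  finally show ?thesis by (simp add: s_def)
qed

lemma pow_le_exp:
  fixes t :: real assumes "t \<ge> 0" shows "t ^ n / fact n \<le> exp t"
proof -
  have "t ^ n / fact n = (\<Sum>k\<in>{n}. t ^ k /\<^sub>R fact k)" by (simp add: divide_inverse)
  also have "\<dots> \<le> (\<Sum>k. t ^ k /\<^sub>R fact k)"
    using assms by (intro sum_le_suminf summable_exp_generic) auto
  also have "\<dots> = exp t" by (simp add: exp_def)
  finally show ?thesis .
qed

lemma pmf_int:
  fixes v :: "'a \<Rightarrow> 'b::euclidean_space"
  assumes "\<And>y. norm (v y) \<le> B"
  shows "integrable (measure_pmf p) v"
   "(\<Sum>\<^sub>\<infinity>y\<in>UNIV. pmf p y *\<^sub>R v y) = measure_pmf.expectation p v"
proof -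
  show I: "integrable (measure_pmf p) v"
    by (rule measure_pmf.integrable_const_bound[where B=B]) (use assms in auto)
  have I2: "integrable (count_space UNIV) (\<lambda>y. pmf p y *\<^sub>R v y)"
    using I unfolding measure_pmf_eq_density
    by (subst (asm) integrable_density) auto
  have "measure_pmf.expectation p v = (\<integral>y. pmf p y *\<^sub>R v y \<partial>count_space UNIV)"
    unfolding measure_pmf_eq_density by (subst integral_density) auto
  also have "\<dots> = infsetsum (\<lambda>y. pmf p y *\<^sub>R v y) UNIV"
    by (simp add: infsetsum_def)
  also have "\<dots> = (\<Sum>\<^sub>\<infinity>y\<in>UNIV. pmf p y *\<^sub>R v y)"
    by (rule infsetsum_infsum) (simp add: abs_summable_on_def I2)
  finally show "(\<Sum>\<^sub>\<infinity>y\<in>UNIV. pmf p y *\<^sub>R v y) = measure_pmf.expectation p v" ..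
qed

lemma drift_norm:
  fixes v :: "'p \<Rightarrow> real^'d" and x :: "real^'d" and p :: "'p pmf"
  assumes xo: "\<And>i. 0 \<le> x$i" and Lb: "\<And>y. norm (x - v y) \<le> L" and L: "L \<ge> 0" "norm x > L"
   and dr: "(\<Sum>\<^sub>\<infinity>y\<in>UNIV. pmf p y *\<^sub>R v y) - x \<le> - ((a / norm x) *\<^sub>R x)"
  shows "measure_pmf.expectation p (\<lambda>y. norm (v y)) \<le> norm x - a + L^2/(2*(norm x - L))"
proof -
  define n where "n = norm x"
  define c where "c = L^2/(2*(norm x - L))"
  have n: "n > 0" using L unfolding n_def by linarith
  have bnd: "norm (v y) \<le> norm x + L" for y
    using Lb[of y] norm_triangle_sub[of "v y" x] by (simp add: norm_minus_commute)
  have Iv: "integrable (measure_pmf p) v" and Ev: "(\<Sum>\<^sub>\<infinity>y\<in>UNIV. pmf p y *\<^sub>R v y) = measure_pmf.expectation p v"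
    using pmf_int[where v=v and B="norm x + L" and p=p] bnd by auto
  define E where "E = measure_pmf.expectation p v"
  have "(E - x) \<bullet> x \<le> (- ((a / norm x) *\<^sub>R x)) \<bullet> x"
    using dr xo unfolding E_def Ev by (intro vec_inner_mono) auto
  also have "\<dots> = - a * n"
    using n by (simp add: n_def dot_square_norm power2_eq_square)
  finally have Ex: "E \<bullet> x \<le> n * n - a * n"
    by (simp add: inner_diff_left n_def dot_square_norm power2_eq_square)
  have I1: "integrable (measure_pmf p) (\<lambda>y. v y \<bullet> x / n + c)"
    using Iv by auto
  have I2: "integrable (measure_pmf p) (\<lambda>y. norm (v y))"
    using Iv by auto
  have "measure_pmf.expectation p (\<lambda>y. norm (v y)) \<le> measure_pmf.expectation p (\<lambda>y. v y \<bullet> x / n + c)"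
    using I1 I2 geo[OF _ L(2) L(1)] Lb unfolding n_def c_def
    by (intro integral_mono) (auto simp: norm_minus_commute)
  also have "\<dots> = (E \<bullet> x) / n + c"
    using Iv by (simp add: E_def)
  also have "\<dots> \<le> n - a + c" using Ex n by (simp add: field_simps)
  finally show ?thesis unfolding n_def c_def .
qed


lemma lyap_step:
  fixes v :: "'p \<Rightarrow> real^'d" and x :: "real^'d" and p :: "'p pmf"
  assumes xo: "\<And>i. 0 \<le> x$i" and Lb: "\<And>y. norm (x - v y) \<le> L" and L: "L > 0" and a: "a > 0"
   and nx: "norm x > L + L^2/a"
   and dr: "(\<Sum>\<^sub>\<infinity>y\<in>UNIV. pmf p y *\<^sub>R v y) - x \<le> - ((a / norm x) *\<^sub>R x)"
   and lam: "0 < lam" "lam * L \<le> 1" "lam * L^2 \<le> a/4"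
  shows "measure_pmf.expectation p (\<lambda>y. exp (lam * norm (v y))) \<le> (1 - lam*a/4) * exp (lam * norm x)"
proof -
  define n where "n = norm x"
  define e where "e = exp (lam * n)"
  have e: "e > 0" by (simp add: e_def)
  have nL: "n - L > L^2/a" using nx unfolding n_def by linarith
  have L2: "L^2/a \<ge> 0" using a by simp
  have nL': "norm x > L" using nL L2 unfolding n_def by linarith
  have c: "L^2/(2*(n - L)) \<le> a/2"
  proof -
    have "L^2 \<le> a * (n - L)" using nL a by (simp add: field_simps)
    have "n - L > 0" using L2 nL by (rule le_less_trans)
    hence pos: "2 * (n - L) > 0" by simp
    hence "L^2/(2*(n - L)) \<le> a * (n - L) / (2*(n - L))"
      using \<open>L^2 \<le> a * (n - L)\<close> by (intro divide_right_mono) auto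
    also have "\<dots> = a/2" using pos by (simp add: field_simps)
    finally show ?thesis .
  qed
  have bnd: "norm (v y) \<le> norm x + L" for y
    using Lb[of y] norm_triangle_sub[of "v y" x] by (simp add: norm_minus_commute)
  have D: "\<bar>norm (v y) - n\<bar> \<le> L" for y
    using Lb[of y] norm_triangle_ineq3[of x "v y"] unfolding n_def by (simp add: norm_minus_commute abs_minus_commute)
  have Ev: "measure_pmf.expectation p (\<lambda>y. norm (v y)) \<le> n - a/2"
    using drift_norm[OF xo Lb less_imp_le[OF L(1)] nL' dr] c unfolding n_def by linarith
  have pt: "exp (lam * norm (v y)) \<le> e * (1 - lam * n + lam^2 * L^2) + (e * lam) * norm (v y)" for y
  proof -
    define t where "t = lam * (norm (v y) - n)"
    have t: "\<bar>t\<bar> \<le> lam * L" using D[of y] lam unfolding t_def by (simp add: abs_mult)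
    hence "\<bar>t\<bar> \<le> 1" using lam by linarith
    hence e1: "exp t \<le> 1 + t + t^2" by (rule exp_quad)
    have "t^2 \<le> (lam * L)^2" using power_mono[OF t abs_ge_zero, of 2] by simp
    hence "t^2 \<le> lam^2 * L^2" by (simp add: power_mult_distrib)
    with e1 have "exp t \<le> 1 + t + lam^2 * L^2" by linarith
    hence "e * exp t \<le> e * (1 + t + lam^2 * L^2)" using e by simp
    moreover have "e * exp t = exp (lam * norm (v y))"
      unfolding e_def t_def by (simp add: mult_exp_exp algebra_simps)
    ultimately show ?thesis unfolding t_def by (simp add: algebra_simps)
  qed
  have I: "integrable (measure_pmf p) (\<lambda>y. norm (v y))"
    by (rule measure_pmf.integrable_const_bound[where B="norm x + L"]) (use bnd in auto)
  have Ie: "integrable (measure_pmf p) (\<lambda>y. exp (lam * norm (v y)))"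
    by (rule measure_pmf.integrable_const_bound[where B="exp (lam * (norm x + L))"])
       (use bnd lam in auto)
  have "measure_pmf.expectation p (\<lambda>y. exp (lam * norm (v y))) \<le>
        measure_pmf.expectation p (\<lambda>y. e * (1 - lam * n + lam^2 * L^2) + (e * lam) * norm (v y))"
    using I Ie pt by (intro integral_mono) auto
  also have "\<dots> = e * (1 - lam * n + lam^2 * L^2) + (e * lam) * measure_pmf.expectation p (\<lambda>y. norm (v y))"
    using I by simp
  also have "\<dots> \<le> e * (1 - lam * n + lam^2 * L^2) + (e * lam) * (n - a/2)"
    using Ev e lam by (intro add_left_mono mult_left_mono) auto
  also have "\<dots> = e * (1 - lam * a / 2 + lam * (lam * L^2))" by (simp add: algebra_simps power2_eq_square)
  also have "\<dots> \<le> e * (1 - lam * a / 2 + lam * (a / 4))"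
    using e lam by (intro mult_left_mono add_left_mono) auto
  also have "\<dots> = (1 - lam*a/4) * exp (lam * norm x)" by (simp add: e_def n_def algebra_simps)
  finally show ?thesis .
qed

lemma powr_exp_bound:
  fixes t r lam :: real assumes "t \<ge> 0" "r > 0" "lam > 0"
  shows "t powr r \<le> 1 + (fact (nat \<lceil>r\<rceil>) / lam ^ nat \<lceil>r\<rceil>) * exp (lam * t)"
proof -
  define N where "N = nat \<lceil>r\<rceil>"
  have e0: "0 \<le> (fact N / lam ^ N) * exp (lam * t)" using assms by simp
  show ?thesis
  proof (cases "t \<le> 1")
    case True
    have "t powr r \<le> 1 powr r" using assms True by (intro powr_mono2) auto
    thus ?thesis using e0 unfolding N_def by simp
  next
    case False
    have "t powr r \<le> t powr (real N)"
      using False real_nat_ceiling_ge[of r] by (intro powr_mono) (auto simp: N_def)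
    also have "\<dots> = t ^ N" using False by (simp add: powr_realpow)
    also have "\<dots> = (lam * t) ^ N / lam ^ N" using assms by (simp add: power_mult_distrib)
    also have "\<dots> \<le> (fact N * exp (lam * t)) / lam ^ N"
    proof -
      have "(lam * t) ^ N / fact N \<le> exp (lam * t)" using assms by (intro pow_le_exp) auto
      hence "(lam * t) ^ N \<le> fact N * exp (lam * t)" by (simp add: divide_le_eq mult.commute)
      thus ?thesis using assms by (intro divide_right_mono) auto
    qed
    also have "\<dots> \<le> 1 + (fact N / lam ^ N) * exp (lam * t)" by simp
    finally show ?thesis unfolding N_def .
  qed
qed

lemma chain_bound:
  fixes f :: "real^'d \<Rightarrow> 'p::countable \<Rightarrow> real^'d" and K :: "real^'d \<Rightarrow> 'p \<Rightarrow> 'p pmf"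
  assumes f_orthant: "\<And>x i. x \<in> orthant \<Longrightarrow> f x i \<in> orthant"
    and x0: "x0 \<in> orthant"
    and rho: "0 \<le> rho" "rho < 1" and b: "b \<ge> 0"
    and step: "\<And>x y. x \<in> orthant \<Longrightarrow>
        (\<integral>\<^sup>+ y'. ennreal (V (f x y')) \<partial>K x y) \<le> ennreal (rho * V x + b)"
    and V: "\<And>x. V x \<ge> 0"
  shows "(\<integral>\<^sup>+ z. ennreal (V (fst z)) \<partial>measure_pmf (markov_law f K (x0, y0) t))
          \<le> ennreal (V x0 + b / (1 - rho))"
proof (induction t)
  case 0
  have "b / (1 - rho) \<ge> 0" using rho b by simp
  thus ?case by (simp add: ennreal_leI)
next
  case (Suc t)
  define B where "B = V x0 + b / (1 - rho)"
  define Mt where "Mt = markov_law f K (x0, y0) t"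
  have supp: "set_pmf (markov_law f K (x0, y0) n) \<subseteq> orthant \<times> UNIV" for n
  proof (induction n)
    case (Suc n)
    thus ?case using f_orthant by (force simp: x0)
  qed (simp add: x0)
  have "(\<integral>\<^sup>+ z. ennreal (V (fst z)) \<partial>measure_pmf (markov_law f K (x0, y0) (Suc t)))
      = (\<integral>\<^sup>+ z. (\<integral>\<^sup>+ y'. ennreal (V (f (fst z) y')) \<partial>K (fst z) (snd z)) \<partial>Mt)"
    by (simp add: Mt_def case_prod_unfold)
  also have "\<dots> \<le> (\<integral>\<^sup>+ z. ennreal rho * ennreal (V (fst z)) + ennreal b \<partial>Mt)"
  proof (rule nn_integral_mono_AE, rule AE_pmfI)
    fix z assume "z \<in> set_pmf Mt"
    hence "fst z \<in> orthant" using supp[of t] unfolding Mt_def by auto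
    from step[OF this, of "snd z"] show "(\<integral>\<^sup>+ y'. ennreal (V (f (fst z) y')) \<partial>K (fst z) (snd z))
        \<le> ennreal rho * ennreal (V (fst z)) + ennreal b"
      using rho b V by (simp add: ennreal_mult ennreal_plus)
  qed
  also have "\<dots> = ennreal rho * (\<integral>\<^sup>+ z. ennreal (V (fst z)) \<partial>Mt) + ennreal b"
    by (subst nn_integral_add) (auto simp: nn_integral_cmult measure_pmf.emeasure_space_1)
  also have "\<dots> \<le> ennreal rho * ennreal B + ennreal b"
    using Suc.IH unfolding Mt_def B_def by (intro add_right_mono mult_left_mono) auto
  also have "\<dots> = ennreal (rho * B + b)" using rho b V[of x0] unfolding B_def by (simp add: ennreal_mult ennreal_plus)
  also have "\<dots> \<le> ennreal B"
  proof (rule ennreal_leI)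
    have "(1 - rho) * B = (1 - rho) * V x0 + b" using rho by (simp add: B_def field_simps)
    moreover have "(1 - rho) * V x0 \<ge> 0" using rho V by simp
    ultimately show "rho * B + b \<le> B" by (simp add: algebra_simps)
  qed
  finally show ?case unfolding B_def .
qed

theorem proposition8:
  fixes f :: "real^'d \<Rightarrow> 'p::countable \<Rightarrow> real^'d"
    and K :: "real^'d \<Rightarrow> 'p \<Rightarrow> 'p pmf"
    and x0 :: "real^'d" and y0 :: 'p
    and L a :: real and C :: "(real^'d) set"
  assumes f_orthant: "\<And>x i. x \<in> orthant \<Longrightarrow> f x i \<in> orthant"
    and f_meas: "\<And>i. (\<lambda>x. f x i) \<in> borel_measurable (restrict_space borel orthant)"
    and K_meas: "\<And>y y'. (\<lambda>x. pmf (K x y) y') \<in> borel_measurable (restrict_space borel orthant)"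
    and x0: "x0 \<in> orthant"
    and L: "L > 0" "\<And>x i. x \<in> orthant \<Longrightarrow> norm (x - f x i) \<le> L"
    and C: "C \<in> sets borel" "bounded C" "C \<subseteq> orthant"
    and a: "a > 0"
    and drift: "\<And>x y. x \<in> orthant - C \<Longrightarrow>
       (\<Sum>\<^sub>\<infinity>y'\<in>UNIV. pmf (K x y) y' *\<^sub>R f x y') - x \<le> - ((a / norm x) *\<^sub>R x)"
  shows "\<forall>r > 0. (SUP t. \<integral>\<^sup>+ z. ennreal (norm (fst z) powr r) \<partial>measure_pmf (markov_law f K (x0, y0) t)) < \<infinity>"
proof -
  obtain M where M: "\<And>x. x \<in> C \<Longrightarrow> norm x \<le> M" using C(2) unfolding bounded_iff by blast
  define R where "R = max M (L + L^2/a)"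
  define lam where "lam = min (1/L) (a/(4*L^2))"
  define rho where "rho = max 0 (1 - lam*a/4)"
  define b where "b = exp (lam * (R + L))"
  define V where "V = (\<lambda>x::real^'d. exp (lam * norm x))"
  have lam: "0 < lam" "lam * L \<le> 1" "lam * L^2 \<le> a/4"
  proof -
    show "0 < lam" using L a by (simp add: lam_def)
    have "lam \<le> 1/L" by (simp add: lam_def)
    thus "lam * L \<le> 1" using L by (simp add: field_simps)
    have "lam \<le> a/(4*L^2)" by (simp add: lam_def)
    thus "lam * L^2 \<le> a/4" using L by (simp add: field_simps)
  qed
  have rho: "0 \<le> rho" "rho < 1" using lam a by (auto simp: rho_def)
  have b: "b \<ge> 0" by (simp add: b_def)
  have step: "(\<integral>\<^sup>+ y'. ennreal (V (f x y')) \<partial>K x y) \<le> ennreal (rho * V x + b)"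
    if xo: "x \<in> orthant" for x y
  proof -
    have bnd: "norm (f x y') \<le> norm x + L" for y'
      using L(2)[OF xo, of y'] norm_triangle_sub[of "f x y'" x] by (simp add: norm_minus_commute)
    have Ie: "integrable (measure_pmf (K x y)) (\<lambda>y'. V (f x y'))"
      by (rule measure_pmf.integrable_const_bound[where B="exp (lam * (norm x + L))"])
         (use bnd lam in \<open>auto simp: V_def\<close>)
    have E: "measure_pmf.expectation (K x y) (\<lambda>y'. V (f x y')) \<le> rho * V x + b"
    proof (cases "x \<in> C \<or> norm x \<le> R")
      case True
      hence nR: "norm x \<le> R" using M unfolding R_def by fastforce
      have "measure_pmf.expectation (K x y) (\<lambda>y'. V (f x y')) \<le> measure_pmf.expectation (K x y) (\<lambda>y'. b)"
      proof (intro integral_mono Ie)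
        fix y' have "lam * norm (f x y') \<le> lam * (R + L)"
          using bnd[of y'] nR lam by (intro mult_left_mono) auto
        thus "V (f x y') \<le> b" by (simp add: V_def b_def)
      qed auto
      also have "\<dots> = b" by simp
      also have "\<dots> \<le> rho * V x + b" using rho by (simp add: V_def)
      finally show ?thesis .
    next
      case False
      hence xC: "x \<in> orthant - C" and nx: "norm x > L + L^2/a" using xo unfolding R_def by auto
      have "measure_pmf.expectation (K x y) (\<lambda>y'. V (f x y')) \<le> (1 - lam*a/4) * exp (lam * norm x)"
        unfolding V_def
        by (rule lyap_step[OF _ _ L(1) a nx drift[OF xC] lam])
           (use xo L(2) in \<open>auto simp: orthant_def\<close>)
      also have "\<dots> \<le> rho * V x + b" using b unfolding V_def rho_def
        by (intro add_increasing2 mult_right_mono) auto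
      finally show ?thesis .
    qed
    have "(\<integral>\<^sup>+ y'. ennreal (V (f x y')) \<partial>K x y) = ennreal (measure_pmf.expectation (K x y) (\<lambda>y'. V (f x y')))"
      using Ie by (intro nn_integral_eq_integral) (auto simp: V_def)
    also have "\<dots> \<le> ennreal (rho * V x + b)" using E by (rule ennreal_leI)
    finally show ?thesis .
  qed
  have Mb: "(\<integral>\<^sup>+ z. ennreal (V (fst z)) \<partial>measure_pmf (markov_law f K (x0, y0) t))
          \<le> ennreal (V x0 + b / (1 - rho))" for t
    by (rule chain_bound[OF f_orthant x0 rho b step]) (auto simp: V_def)
  show ?thesis
  proof (intro allI impI)
    fix r :: real assume r: "r > 0"
    define c where "c = fact (nat \<lceil>r\<rceil>) / lam ^ nat \<lceil>r\<rceil>"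
    have c: "c \<ge> 0" using lam by (simp add: c_def)
    have "(\<integral>\<^sup>+ z. ennreal (norm (fst z) powr r) \<partial>measure_pmf (markov_law f K (x0, y0) t))
          \<le> ennreal (1 + c * (V x0 + b / (1 - rho)))" for t
    proof -
      let ?M = "measure_pmf (markov_law f K (x0, y0) t)"
      have "(\<integral>\<^sup>+ z. ennreal (norm (fst z) powr r) \<partial>?M) \<le> (\<integral>\<^sup>+ z. ennreal 1 + ennreal c * ennreal (V (fst z)) \<partial>?M)"
      proof (rule nn_integral_mono)
        fix z
        have "norm (fst z) powr r \<le> 1 + c * V (fst z)"
          unfolding c_def V_def by (rule powr_exp_bound[OF norm_ge_zero r lam(1)])
        show "ennreal (norm (fst z) powr r) \<le> ennreal 1 + ennreal c * ennreal (V (fst z))"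
        proof -
          have "ennreal 1 + ennreal c * ennreal (V (fst z)) = ennreal (1 + c * V (fst z))"
            using c by (simp add: V_def ennreal_mult)
          thus ?thesis using \<open>norm (fst z) powr r \<le> 1 + c * V (fst z)\<close> by (simp only: ennreal_leI)
        qed
      qed
      also have "\<dots> = 1 + ennreal c * (\<integral>\<^sup>+ z. ennreal (V (fst z)) \<partial>?M)"
        by (subst nn_integral_add) (auto simp: nn_integral_cmult measure_pmf.emeasure_space_1)
      also have "\<dots> \<le> 1 + ennreal c * ennreal (V x0 + b / (1 - rho))"
        using Mb[of t] by (intro add_left_mono mult_left_mono) auto
      also have "\<dots> = ennreal (1 + c * (V x0 + b / (1 - rho)))"
        using c rho b by (simp add: V_def ennreal_mult ennreal_plus)
      finally show ?thesis .
    qed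
    hence "(SUP t. \<integral>\<^sup>+ z. ennreal (norm (fst z) powr r) \<partial>measure_pmf (markov_law f K (x0, y0) t))
          \<le> ennreal (1 + c * (V x0 + b / (1 - rho)))"
      by (intro SUP_least) auto
    thus "(SUP t. \<integral>\<^sup>+ z. ennreal (norm (fst z) powr r) \<partial>measure_pmf (markov_law f K (x0, y0) t)) < \<infinity>"
      using le_less_trans by fastforce
  qed
qed

end
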